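(* Let $A\in\mathbb{R}^{d\times d}$ and let $\mathbb{A}x=Ax$. Let $N\ge1$ and real coefficients $h_{k,j}$ ($1\le k\le N$, $0\le j\le k-1$) be given. Define \[ x_{k+1}=x_k-\sum_{j=0}^{k}h_{k+1,j}\,\mathbb{A}x_j,\qquad k=0,1,\dots,N-1, \] and its H-dual \[ \hat x_{k+1}=\hat x_k-\sum_{j=0}^{k}h_{N-j,N-k-1}\,\mathbb{A}\hat x_j,\qquad k=0,1,\dots,N-1. \] If $\hat x_0=x_0$, then $\hat x_N=x_N$. *)

theory Defs
  imports "HOL-Analysis.Analysis"
begin

end

theory Submission
  imports Defs
begin

type_synonym 'n sq = "real^'n::finite^'n::finite"

lemma mm_sum_left: "(A::'n::finite sq) ** sum f S = (\<Sum>i\<in>S. A ** f i)"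
  by (induction S rule: infinite_finite_induct) (simp_all add: matrix_add_ldistrib)

lemma mm_add_rdistrib: "((B::real^'n::finite^'m::finite) + C) ** A = B ** A + C ** A"
  by (vector matrix_matrix_mult_def sum.distrib[symmetric] field_simps)

lemma mm_sum_right: "sum (f::_\<Rightarrow>real^'n::finite^'m::finite) S ** A = (\<Sum>i\<in>S. f i ** A)"
  by (induction S rule: infinite_finite_induct) (simp_all add: mm_add_rdistrib[of _ _ A])

lemma mm_diff_left: "(A::'n::finite sq) ** (B - C) = A ** B - A ** C"
  by (metis add_diff_cancel_right' diff_add_cancel matrix_add_ldistrib)

lemma mm_diff_right: "((B::real^'n::finite^'m::finite) - C) ** A = B ** A - C ** A"
  by (metis add_diff_cancel_right' diff_add_cancel mm_add_rdistrib)

function Gm :: "(nat \<Rightarrow> nat \<Rightarrow> 'n::finite sq) \<Rightarrow> nat \<Rightarrow> nat \<Rightarrow> 'n::finite sq" where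
"Gm c b a = (if a < b then 0 else if a = b then mat 1 else
   Gm c b (a - 1) - (\<Sum>j\<in>{b..<a}. c a j ** Gm c b j))"
  by auto
termination by (relation "Wellfounded.measure (\<lambda>(c,b,a). a)") auto

declare Gm.simps[simp del]

lemma Gm_lt: "a < b \<Longrightarrow> Gm c b a = 0" by (simp add: Gm.simps)
lemma Gm_eq[simp]: "Gm c b b = mat 1" by (simp add: Gm.simps)
lemma Gm_row: "b \<le> a \<Longrightarrow> Gm c b (Suc a) = Gm c b a - (\<Sum>j\<in>{b..a}. c (Suc a) j ** Gm c b j)"
  by (subst Gm.simps) (simp add: atLeastLessThanSuc_atLeastAtMost)

lemma swap_tri: fixes a b :: nat shows "(\<Sum>j\<in>{b<..a}. \<Sum>i\<in>{b<..j}. f i j) = (\<Sum>i\<in>{b<..a}. \<Sum>j\<in>{i..a}. (f i j :: 'n::finite sq))"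
proof (induction a)
  case 0 then show ?case by simp
next
  case (Suc a)
  show ?case
  proof (cases "b < Suc a")
    case True
    have s1: "{b<..Suc a} = insert (Suc a) {b<..a}" using True by auto
    have "(\<Sum>i\<in>{b<..Suc a}. \<Sum>j\<in>{i..Suc a}. f i j) = f (Suc a) (Suc a) + (\<Sum>i\<in>{b<..a}. \<Sum>j\<in>{i..Suc a}. f i j)"
      by (simp add: s1)
    also have "(\<Sum>i\<in>{b<..a}. \<Sum>j\<in>{i..Suc a}. f i j) = (\<Sum>i\<in>{b<..a}. f i (Suc a) + (\<Sum>j\<in>{i..a}. f i j))"
      by (intro sum.cong refl) (auto simp: atLeastAtMostSuc_conv)
    finally show ?thesis using Suc s1 True
      by (simp add: sum.distrib atLeastAtMostSuc_conv algebra_simps)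
  next
    case False then show ?thesis by simp
  qed
qed

lemma Gm_col: "b < a \<Longrightarrow> Gm c b a = Gm c (Suc b) a - (\<Sum>i\<in>{b<..a}. Gm c i a ** c i b)"
proof (induction a rule: less_induct)
  case (less a)
  then obtain a' where a: "a = Suc a'" and ba': "b \<le> a'" by (cases a) auto
  show ?case
  proof (cases "a' = b")
    case True
    have e: "{b<..Suc b} = {Suc b}" by auto
    show ?thesis using True a by (simp add: Gm_row e)
  next
    case False
    hence lt: "b < a'" using ba' by simp
    have ie: "{Suc b..a'} = {b<..a'}" by auto
    have ins1: "{b..a'} = insert b {b<..a'}" using lt by auto
    have ins2: "{b<..a} = insert a {b<..a'}" using a lt by auto
    define S1 where "S1 = (\<Sum>j\<in>{b<..a'}. c a j ** Gm c (Suc b) j)"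
    define S2 where "S2 = (\<Sum>i\<in>{b<..a'}. Gm c i a' ** c i b)"
    define S3 where "S3 = (\<Sum>j\<in>{b<..a'}. \<Sum>i\<in>{b<..j}. (c a j ** Gm c i j) ** c i b)"
    have IHs: "\<And>j. j \<in> {b<..a'} \<Longrightarrow> Gm c b j = Gm c (Suc b) j - (\<Sum>i\<in>{b<..j}. Gm c i j ** c i b)"
      using less.IH a by auto
    have L1: "(\<Sum>j\<in>{b..a'}. c a j ** Gm c b j) = c a b + S1 - S3"
    proof -
      have "(\<Sum>j\<in>{b..a'}. c a j ** Gm c b j) = c a b + (\<Sum>j\<in>{b<..a'}. c a j ** Gm c b j)"
        by (simp add: ins1)
      also have "(\<Sum>j\<in>{b<..a'}. c a j ** Gm c b j) = (\<Sum>j\<in>{b<..a'}. c a j ** Gm c (Suc b) j - (\<Sum>i\<in>{b<..j}. (c a j ** Gm c i j) ** c i b))"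
        by (intro sum.cong refl) (simp add: IHs mm_diff_left mm_sum_left matrix_mul_assoc)
      finally show ?thesis by (simp add: S1_def S3_def sum_subtractf)
    qed
    have LHS: "Gm c b a = Gm c (Suc b) a' - S2 - (c a b + S1 - S3)"
      using a Gm_row[OF ba', of c] L1 less.IH[of a'] lt a by (simp add: S2_def)
    have R1: "Gm c (Suc b) a = Gm c (Suc b) a' - S1"
      using a Gm_row[of "Suc b" a' c] lt by (simp add: S1_def ie)
    have R2: "(\<Sum>i\<in>{b<..a}. Gm c i a ** c i b) = c a b + S2 - S3"
    proof -
      have "(\<Sum>i\<in>{b<..a}. Gm c i a ** c i b) = c a b + (\<Sum>i\<in>{b<..a'}. Gm c i a ** c i b)"
        using a unfolding ins2 by (subst sum.insert) auto
      also have "(\<Sum>i\<in>{b<..a'}. Gm c i a ** c i b) = (\<Sum>i\<in>{b<..a'}. Gm c i a' ** c i b - (\<Sum>j\<in>{i..a'}. (c a j ** Gm c i j) ** c i b))"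
        by (intro sum.cong refl) (simp add: a Gm_row mm_diff_right mm_sum_right)
      also have "\<dots> = S2 - S3"
        by (simp add: S2_def S3_def sum_subtractf swap_tri)
      finally show ?thesis by simp
    qed
    show ?thesis unfolding LHS R1 R2 by (simp add: algebra_simps)
  qed
qed

lemma Gm_comm: "A ** Gm (\<lambda>i j. h i j *\<^sub>R A) b a = Gm (\<lambda>i j. h i j *\<^sub>R A) b a ** A"
proof (induction a rule: less_induct)
  case (less a)
  show ?case
  proof (cases "a \<le> b")
    case True
    then show ?thesis by (cases "a = b") (auto simp: Gm_lt)
  next
    case False
    then obtain a' where a: "a = Suc a'" and ba': "b \<le> a'" by (cases a) auto
    have "A ** (\<Sum>j\<in>{b..a'}. (h a j *\<^sub>R A) ** Gm (\<lambda>i j. h i j *\<^sub>R A) b j)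
       = (\<Sum>j\<in>{b..a'}. (h a j *\<^sub>R A) ** Gm (\<lambda>i j. h i j *\<^sub>R A) b j) ** A"
      unfolding mm_sum_left mm_sum_right
    proof (intro sum.cong refl)
      fix j assume "j \<in> {b..a'}"
      hence "j < a" using a by auto
      hence IH: "A ** Gm (\<lambda>i j. h i j *\<^sub>R A) b j = Gm (\<lambda>i j. h i j *\<^sub>R A) b j ** A"
        using less.IH by blast
      show "A ** ((h a j *\<^sub>R A) ** Gm (\<lambda>i j. h i j *\<^sub>R A) b j) = ((h a j *\<^sub>R A) ** Gm (\<lambda>i j. h i j *\<^sub>R A) b j) ** A"
      proof -
        let ?G = "Gm (\<lambda>i j. h i j *\<^sub>R A) b j"
        have "A ** (A ** ?G) = (A ** ?G) ** A" by (simp add: IH matrix_mul_assoc)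
        thus ?thesis by (simp add: matrix_scalar_ac scalar_matrix_assoc[symmetric])
      qed
    qed
    moreover have "A ** Gm (\<lambda>i j. h i j *\<^sub>R A) b a' = Gm (\<lambda>i j. h i j *\<^sub>R A) b a' ** A"
      using less.IH a by blast
    ultimately show ?thesis using a ba' by (simp add: Gm_row mm_diff_left mm_diff_right)
  qed
qed

lemma Gm_flip:
  assumes "b \<le> a" "a \<le> M"
  shows "Gm (\<lambda>i j. h (M - j) (M - i) *\<^sub>R A) b a = Gm (\<lambda>i j. h i j *\<^sub>R A) (M - a) (M - b)"
  using assms
proof (induction a rule: less_induct)
  case (less a)
  let ?c = "\<lambda>i j. h i j *\<^sub>R A"
  let ?d = "\<lambda>i j. h (M - j) (M - i) *\<^sub>R A"
  show ?case
  proof (cases "a = b")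
    case True then show ?thesis by simp
  next
    case False
    then obtain a' where a: "a = Suc a'" and ba': "b \<le> a'" using less.prems by (cases a) auto
    have aM: "a \<le> M" using less.prems by simp
    have col: "Gm ?c (M - a) (M - b) = Gm ?c (M - a') (M - b) - (\<Sum>i\<in>{M - a<..M - b}. Gm ?c i (M - b) ** ?c i (M - a))"
      using Gm_col[of "M - a" "M - b" ?c] aM ba' a
      by (simp add: Suc_diff_Suc)
    have re: "(\<Sum>i\<in>{M - a<..M - b}. Gm ?c i (M - b) ** ?c i (M - a)) = (\<Sum>j\<in>{b..a'}. Gm ?c (M - j) (M - b) ** ?c (M - j) (M - a))"
      by (rule sum.reindex_bij_witness[where i="\<lambda>i. M - i" and j="\<lambda>j. M - j"]) (use aM a in auto)
    have tw: "(\<Sum>j\<in>{b..a'}. ?d a j ** Gm ?d b j) = (\<Sum>j\<in>{b..a'}. Gm ?c (M - j) (M - b) ** ?c (M - j) (M - a))"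
    proof (intro sum.cong refl)
      fix j assume j: "j \<in> {b..a'}"
      hence "Gm ?d b j = Gm ?c (M - j) (M - b)" using less.IH[of j] a aM by auto
      thus "?d a j ** Gm ?d b j = Gm ?c (M - j) (M - b) ** ?c (M - j) (M - a)"
        by (simp add: matrix_scalar_ac scalar_matrix_assoc[symmetric] Gm_comm)
    qed
    have "Gm ?d b a = Gm ?d b a' - (\<Sum>j\<in>{b..a'}. ?d a j ** Gm ?d b j)"
      using a ba' by (simp add: Gm_row)
    also have "Gm ?d b a' = Gm ?c (M - a') (M - b)" using less.IH[of a'] a aM ba' by auto
    finally show ?thesis using col re tw by simp
  qed
qed

lemma mv_sum: "sum (f::_\<Rightarrow>real^'n::finite^'m::finite) S *v v = (\<Sum>i\<in>S. f i *v v)"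
  by (induction S rule: infinite_finite_induct) (simp_all add: matrix_vector_mult_add_rdistrib)

lemma Gm_sol:
  fixes y :: "nat \<Rightarrow> real^'n::finite" and A :: "real^'n^'n"
  assumes rec: "\<And>k. k < N \<Longrightarrow> y (Suc k) = y k - (\<Sum>j\<le>k. g (Suc k) j *\<^sub>R (A *v y j))"
  shows "a \<le> N \<Longrightarrow> y a = Gm (\<lambda>i j. g i j *\<^sub>R A) 0 a *v y 0"
proof (induction a rule: less_induct)
  case (less a)
  show ?case
  proof (cases a)
    case 0 then show ?thesis by simp
  next
    case (Suc k)
    have IH: "\<And>j. j \<le> k \<Longrightarrow> y j = Gm (\<lambda>i j. g i j *\<^sub>R A) 0 j *v y 0"
    proof -
      fix j assume "j \<le> k"
      then show "y j = Gm (\<lambda>i j. g i j *\<^sub>R A) 0 j *v y 0"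
        using less.IH[of j] less.prems Suc by simp
    qed
    have "y a = y k - (\<Sum>j\<le>k. g (Suc k) j *\<^sub>R (A *v y j))" using rec[of k] Suc less.prems by simp
    also have "(\<Sum>j\<le>k. g (Suc k) j *\<^sub>R (A *v y j)) = (\<Sum>j\<in>{0..k}. ((g (Suc k) j *\<^sub>R A) ** Gm (\<lambda>i j. g i j *\<^sub>R A) 0 j) *v y 0)"
      unfolding atMost_atLeast0
    proof (intro sum.cong refl)
      fix j assume "j \<in> {0..k}"
      hence e: "y j = Gm (\<lambda>i j. g i j *\<^sub>R A) 0 j *v y 0" using IH[of j] by simp
      show "g (Suc k) j *\<^sub>R (A *v y j) = ((g (Suc k) j *\<^sub>R A) ** Gm (\<lambda>i j. g i j *\<^sub>R A) 0 j) *v y 0"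
        unfolding e by (simp add: scalar_matrix_assoc[symmetric] scaleR_matrix_vector_assoc[symmetric] matrix_vector_mul_assoc)
    qed
    also have "y k = Gm (\<lambda>i j. g i j *\<^sub>R A) 0 k *v y 0" using IH[of k] by simp
    finally show ?thesis using Suc
      by (simp add: Gm_row mv_sum matrix_vector_mult_diff_rdistrib)
  qed
qed

theorem propositionI1:
  fixes A :: "real ^ 'd ^ 'd"
    and h :: "nat \<Rightarrow> nat \<Rightarrow> real"
    and N :: nat
    and x xh :: "nat \<Rightarrow> real ^ 'd"
  assumes "N \<ge> 1"
    and x_rec: "\<And>k. k < N \<Longrightarrow>
           x (Suc k) = x k - (\<Sum>j\<le>k. h (Suc k) j *\<^sub>R (A *v x j))"
    and xh_rec: "\<And>k. k < N \<Longrightarrow>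
           xh (Suc k) = xh k - (\<Sum>j\<le>k. h (N - j) (N - k - 1) *\<^sub>R (A *v xh j))"
    and "xh 0 = x 0"
  shows "xh N = x N"
proof -
  have r2: "\<And>k. k < N \<Longrightarrow>
           xh (Suc k) = xh k - (\<Sum>j\<le>k. (\<lambda>i j. h (N - j) (N - i)) (Suc k) j *\<^sub>R (A *v xh j))"
    using xh_rec by simp
  have "xh N = Gm (\<lambda>i j. h (N - j) (N - i) *\<^sub>R A) 0 N *v xh 0"
    by (rule Gm_sol[of N xh "\<lambda>i j. h (N - j) (N - i)" A, OF r2 order_refl])
  also have "\<dots> = Gm (\<lambda>i j. h i j *\<^sub>R A) 0 N *v x 0"
    using Gm_flip[of 0 N N h A] assms(4) by simp
  also have "\<dots> = x N" by (rule Gm_sol[of N x h A, OF x_rec order_refl, symmetric])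
  finally show ?thesis .
qed

end
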